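(* Let $P$ be the uniform distribution on $[0,1]$ and $\beta=\{\frac14,\frac12\}$. Let $n=4x+2$ for some $x\in\mathbb{N}$, let $\alpha_n$ be a conditional optimal set of $n$-points for $P$ with respect to $\beta$, and let $k=\mathrm{card}(\alpha_n\cap[0,\frac14])$, $\ell=\mathrm{card}(\alpha_n\cap[\frac14,\frac12])$, $m=\mathrm{card}(\alpha_n\cap[\frac12,1])$. Then $(k-1):(\ell-2):(m-1)=1:1:2$.
   Context: For a Borel probability measure $P$ on $\mathbb{R}$ and finite $\beta$ with $\mathrm{card}(\beta)=r$, for $n\ge r$, $V_n=\inf\{\int\min_{a\in\alpha\cup\beta}(x-a)^2dP(x):\mathrm{card}(\alpha)\le n-r\}$; a set $\alpha\cup\beta$ attaining the infimum, with each point of $\beta$ having a Voronoi region of positive $P$-measure, is a conditional optimal set of $n$-points with respect to $\beta$ (it contains $\beta$). *)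

theory Defs
  imports "HOL-Analysis.Analysis"
begin

definition qerr :: "real measure \<Rightarrow> real set \<Rightarrow> real" where
  "qerr P S = (\<integral>x. Min ((\<lambda>a. (x - a)^2) ` S) \<partial>P)"

definition condV :: "real measure \<Rightarrow> real set \<Rightarrow> nat \<Rightarrow> real" where
  "condV P \<beta> n = (INF \<alpha> \<in> {\<alpha>. finite \<alpha> \<and> card \<alpha> \<le> n - card \<beta>}. qerr P (\<alpha> \<union> \<beta>))"

definition voronoi :: "real set \<Rightarrow> real \<Rightarrow> real set" where
  "voronoi S b = {x. \<forall>a\<in>S. dist x b \<le> dist x a}"

definition cond_opt_set :: "real measure \<Rightarrow> real set \<Rightarrow> nat \<Rightarrow> real set \<Rightarrow> bool" where
  "cond_opt_set P \<beta> n S \<longleftrightarrow>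
     finite \<beta> \<and> card \<beta> \<le> n \<and>
     (\<exists>\<alpha>. finite \<alpha> \<and> card \<alpha> \<le> n - card \<beta> \<and> S = \<alpha> \<union> \<beta>) \<and>
     qerr P S = condV P \<beta> n \<and>
     (\<forall>b\<in>\<beta>. measure P (voronoi S b) > 0)"

end

theory Submission
  imports Defs
begin

lemma qerr_conv:
  fixes f :: "real \<Rightarrow> real"
  assumes c: "continuous_on UNIV f"
  shows "(\<integral>x. f x \<partial>(uniform_measure lborel {0..1})) = integral {0..1} f"
proof -
  have m: "f \<in> borel_measurable borel" using c by (rule borel_measurable_continuous_onI)
  have "uniform_measure lborel {0..1::real} = density lborel (\<lambda>x. ennreal (indicator {0..1::real} x))"
    unfolding uniform_measure_def by (simp add: ennreal_indicator divide_ennreal_def)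
  then have "(\<integral>x. f x \<partial>(uniform_measure lborel {0..1})) = (\<integral>x. indicator {0..1::real} x *\<^sub>R f x \<partial>lborel)"
    using m by (simp add: integral_density)
  also have "\<dots> = (LINT x : {0..1} | lborel. f x)" by (simp add: set_lebesgue_integral_def)
  also have "\<dots> = integral {0..1} f"
    by (rule set_borel_integral_eq_integral(2)[OF borel_integrable_atLeastAtMost'])
       (rule continuous_on_subset[OF c], simp)
  finally show ?thesis .
qed

lemma cont_Min:
  fixes S :: "real set"
  assumes "finite S" "S \<noteq> {}"
  shows "continuous_on UNIV (\<lambda>y. Min ((\<lambda>a. (y - a)^2) ` S))"
  using assms
proof (induction S rule: finite_ne_induct)
  case (singleton x)
  then show ?case by (simp add: continuous_intros)
next
  case (insert x F)
  then have "(\<lambda>y. Min ((\<lambda>a. (y - a)^2) ` insert x F)) = (\<lambda>y. min ((y-x)^2) (Min ((\<lambda>a. (y - a)^2) ` F)))"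
    by (auto simp: Min_insert)
  then show ?case using insert by (auto intro!: continuous_intros)
qed

definition bump :: "real \<Rightarrow> real \<Rightarrow> real \<Rightarrow> real" where
  "bump R t y = max 0 (R^2 - (y - t)^2)"

definition PP :: "real \<Rightarrow> real \<Rightarrow> real" where
  "PP R z = R^2 * z - z^3/3 + 2*R^3/3"

definition GG :: "real \<Rightarrow> real \<Rightarrow> real \<Rightarrow> real" where
  "GG R t y = PP R (max (-R) (min R (y - t)))"

lemma bump_nonneg: "bump R t y \<ge> 0" by (simp add: bump_def)

lemma bump_cont: "continuous_on A (bump R t)"
  unfolding bump_def by (intro continuous_intros)

lemma GG_deriv:
  assumes R: "R > 0" and x: "x \<noteq> t - R" "x \<noteq> t + R"
  shows "(GG R t has_field_derivative bump R t x) (at x)"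
proof -
  consider "x < t - R" | "t - R < x \<and> x < t + R" | "x > t + R" using x by linarith
  then show ?thesis
  proof cases
    case 1
    have e: "bump R t x = 0" unfolding bump_def
    proof -
      have "\<bar>R\<bar> \<le> \<bar>x - t\<bar>" using 1 R by auto
      then have "R^2 \<le> (x - t)^2" by (simp add: abs_le_square_iff)
      then show "max 0 (R\<^sup>2 - (x - t)\<^sup>2) = 0" by simp
    qed
    have "((\<lambda>y. 0) has_field_derivative 0) (at x)" by simp
    then have "(GG R t has_field_derivative 0) (at x)"
      by (rule has_field_derivative_transform_within_open[where S="{..<t-R}"])
         (use 1 R in \<open>auto simp: GG_def PP_def power3_eq_cube power2_eq_square\<close>)
    then show ?thesis using e by simp
  next
    case 2
    have e: "bump R t x = R^2 - (x-t)^2" unfolding bump_def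
    proof -
      have "(x - t)^2 \<le> R^2" using 2 R by (simp add: abs_le_square_iff[symmetric] abs_le_iff)
      then show "max 0 (R\<^sup>2 - (x - t)\<^sup>2) = R^2 - (x-t)^2" by simp
    qed
    have "((\<lambda>y. PP R (y - t)) has_field_derivative R^2 - (x-t)^2) (at x)"
      unfolding PP_def by (auto intro!: derivative_eq_intros simp: power2_eq_square)
    then have "(GG R t has_field_derivative R^2 - (x-t)^2) (at x)"
      by (rule has_field_derivative_transform_within_open[where S="{t-R<..<t+R}"])
         (use 2 R in \<open>auto simp: GG_def\<close>)
    then show ?thesis using e by simp
  next
    case 3
    have e: "bump R t x = 0" unfolding bump_def
    proof -
      have "R^2 \<le> (x - t)^2" using 3 R by (simp add: abs_le_square_iff[symmetric])
      then show "max 0 (R\<^sup>2 - (x - t)\<^sup>2) = 0" by simp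
    qed
    have "((\<lambda>y. 4*R^3/3) has_field_derivative 0) (at x)" by simp
    then have "(GG R t has_field_derivative 0) (at x)"
      by (rule has_field_derivative_transform_within_open[where S="{t+R<..}"])
         (use 3 R in \<open>auto simp: GG_def PP_def power3_eq_cube power2_eq_square\<close>)
    then show ?thesis using e by simp
  qed
qed

lemma bump_has_integral:
  assumes R: "R > 0" and uv: "u \<le> v"
  shows "(bump R t has_integral (GG R t v - GG R t u)) {u..v}"
proof (rule fundamental_theorem_of_calculus_strong[where S="{t-R, t+R}"])
  show "continuous_on {u..v} (GG R t)" unfolding GG_def PP_def by (intro continuous_intros) auto
  fix x assume "x \<in> {u..v} - {t - R, t + R}"
  then show "(GG R t has_vector_derivative bump R t x) (at x)"
    using GG_deriv[OF R] by (simp add: has_real_derivative_iff_has_vector_derivative[symmetric])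
qed (use uv in auto)

lemma PP_bounds:
  assumes "R > 0" "-R \<le> z" "z \<le> R"
  shows "0 \<le> PP R z" "PP R z \<le> 4*R^3/3"
    "0 \<le> z \<Longrightarrow> 2*R^3/3 \<le> PP R z" "z \<le> 0 \<Longrightarrow> PP R z \<le> 2*R^3/3"
proof -
  have e1: "PP R z = (z+R)^2 * (2*R - z) / 3" by (simp add: PP_def field_simps power2_eq_square power3_eq_cube; algebra?)
  have "0 \<le> (z+R)^2 * (2*R - z)" using assms by (intro mult_nonneg_nonneg) auto
  then show "0 \<le> PP R z" unfolding e1 by simp
  have e2: "PP R z = 4*R^3/3 - (R - z)^2 * (2*R + z) / 3" by (simp add: PP_def field_simps power2_eq_square power3_eq_cube; algebra?)
  have "0 \<le> (R - z)^2 * (2*R + z)" using assms by (intro mult_nonneg_nonneg) auto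
  then show "PP R z \<le> 4*R^3/3" unfolding e2 by simp
  have e3: "PP R z = 2*R^3/3 + z * (3*R^2 - z^2) / 3" by (simp add: PP_def field_simps power2_eq_square power3_eq_cube; algebra?)
  have zz: "z^2 \<le> R^2" using assms by (simp add: abs_le_square_iff[symmetric] abs_le_iff)
  have zz3: "z^2 \<le> 3*R^2" using zz zero_le_power2[of R] by linarith
  show "0 \<le> z \<Longrightarrow> 2*R^3/3 \<le> PP R z"
  proof -
    assume "0 \<le> z"
    then have "0 \<le> z * (3*R^2 - z^2)" using zz3 by (intro mult_nonneg_nonneg) auto
    then show ?thesis unfolding e3 by simp
  qed
  show "z \<le> 0 \<Longrightarrow> PP R z \<le> 2*R^3/3"
  proof -
    assume "z \<le> 0"
    then have "z * (3*R^2 - z^2) \<le> 0" using zz3 by (intro mult_nonpos_nonneg) auto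
    then show ?thesis unfolding e3 by simp
  qed
qed

lemma PP_special: "PP R (-R) = 0" "PP R R = 4*R^3/3" "PP R 0 = 2*R^3/3"
  by (simp_all add: PP_def power2_eq_square power3_eq_cube)

lemma GG_bounds:
  assumes R: "R > 0"
  shows "0 \<le> GG R t y" "GG R t y \<le> 4*R^3/3"
    "t \<le> y \<Longrightarrow> 2*R^3/3 \<le> GG R t y" "y \<le> t \<Longrightarrow> GG R t y \<le> 2*R^3/3"
    "y \<le> t - R \<Longrightarrow> GG R t y = 0" "t + R \<le> y \<Longrightarrow> GG R t y = 4*R^3/3"
    "GG R t t = 2*R^3/3"
proof -
  define z where "z = max (-R) (min R (y - t))"
  have z: "-R \<le> z" "z \<le> R" using R by (auto simp: z_def)
  have g: "GG R t y = PP R z" by (simp add: GG_def z_def)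
  show "0 \<le> GG R t y" "GG R t y \<le> 4*R^3/3" using PP_bounds[OF R z] g by auto
  show "t \<le> y \<Longrightarrow> 2*R^3/3 \<le> GG R t y" using PP_bounds[OF R z] g R by (auto simp: z_def)
  show "y \<le> t \<Longrightarrow> GG R t y \<le> 2*R^3/3" using PP_bounds[OF R z] g R by (auto simp: z_def)
  show "y \<le> t - R \<Longrightarrow> GG R t y = 0"
  proof -
    assume "y \<le> t - R" then have "z = -R" using R by (auto simp: z_def)
    then show ?thesis using g PP_special by simp
  qed
  show "t + R \<le> y \<Longrightarrow> GG R t y = 4*R^3/3"
  proof -
    assume "t + R \<le> y" then have "z = R" using R by (auto simp: z_def)
    then show ?thesis using g PP_special by simp
  qed
  show "GG R t t = 2*R^3/3" using R PP_special by (simp add: GG_def)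
qed

lemma int_bump:
  assumes R: "R > 0" and uv: "u \<le> v"
  shows "bump R t integrable_on {u..v}" "integral {u..v} (bump R t) = GG R t v - GG R t u"
  using bump_has_integral[OF R uv] by (auto simp: has_integral_iff)

definition wt :: "real \<Rightarrow> real \<Rightarrow> real \<Rightarrow> real" where
  "wt u v t = (if u < t \<and> t < v then 1 else 1/2)"

lemma int_bump_le:
  assumes R: "R > 0" and uv: "u \<le> v"
  shows "integral {u..v} (bump R t) \<le> 4*R^3/3 * wt u v t"
proof (cases "u < t \<and> t < v")
  case True
  then show ?thesis unfolding int_bump(2)[OF R uv] wt_def using GG_bounds(1-6)[OF R, where t=t and y=u] GG_bounds(1-6)[OF R, where t=t and y=v] GG_bounds(7)[OF R, of t] by auto
next
  case False
  then have "t \<le> u \<or> v \<le> t" by auto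
  then show ?thesis unfolding int_bump(2)[OF R uv] wt_def using GG_bounds(1-6)[OF R, where t=t and y=u] GG_bounds(1-6)[OF R, where t=t and y=v] GG_bounds(7)[OF R, of t] False by auto
qed

lemma int_bump_eq:
  assumes R: "R > 0" and uv: "u \<le> v"
  shows "u \<le> t - R \<Longrightarrow> t + R \<le> v \<Longrightarrow> integral {u..v} (bump R t) = 4*R^3/3 * wt u v t"
    "u \<le> t - R \<Longrightarrow> t = v \<Longrightarrow> integral {u..v} (bump R t) = 4*R^3/3 * wt u v t"
    "t = u \<Longrightarrow> t + R \<le> v \<Longrightarrow> integral {u..v} (bump R t) = 4*R^3/3 * wt u v t"
  unfolding int_bump(2)[OF R uv] wt_def using GG_bounds(1-6)[OF R, where t=t and y=u] GG_bounds(1-6)[OF R, where t=t and y=v] GG_bounds(7)[OF R, of t] R by auto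

lemma int_bumpsum:
  assumes R: "R > 0" and uv: "u \<le> v" and I: "finite I"
  shows "(\<lambda>y. R^2 - (\<Sum>i\<in>I. bump R (p i) y)) integrable_on {u..v}"
    "integral {u..v} (\<lambda>y. R^2 - (\<Sum>i\<in>I. bump R (p i) y)) = R^2 * (v - u) - (\<Sum>i\<in>I. integral {u..v} (bump R (p i)))"
proof -
  have i1: "(\<lambda>y. \<Sum>i\<in>I. bump R (p i) y) integrable_on {u..v}"
    using int_bump(1)[OF R uv] by (intro integrable_sum I) auto
  have i0: "(\<lambda>y. R^2) integrable_on {u..v}" by (rule integrable_const_ivl)
  show "(\<lambda>y. R^2 - (\<Sum>i\<in>I. bump R (p i) y)) integrable_on {u..v}" using integrable_diff[OF i0 i1] by simp
  have "integral {u..v} (\<lambda>y. R^2 - (\<Sum>i\<in>I. bump R (p i) y)) = integral {u..v} (\<lambda>y. R^2) - integral {u..v} (\<lambda>y. \<Sum>i\<in>I. bump R (p i) y)"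
    by (rule integral_diff[OF i0 i1])
  also have "integral {u..v} (\<lambda>y. \<Sum>i\<in>I. bump R (p i) y) = (\<Sum>i\<in>I. integral {u..v} (bump R (p i)))"
    using int_bump(1)[OF R uv] by (subst integral_sum[OF I]) auto
  finally show "integral {u..v} (\<lambda>y. R^2 - (\<Sum>i\<in>I. bump R (p i) y)) = R^2 * (v - u) - (\<Sum>i\<in>I. integral {u..v} (bump R (p i)))"
    using uv by simp
qed

lemma region_lb:
  assumes uv: "u < v" and T: "finite T" "T \<noteq> {}" and Fi: "F integrable_on {u..v}"
    and near: "\<forall>y\<in>{u..v}. \<exists>t\<in>T. (y - t)^2 \<le> F y"
  shows "(v - u)^3 / (12 * (\<Sum>t\<in>T. wt u v t)^2) \<le> integral {u..v} F"
proof -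
  define N where "N = (\<Sum>t\<in>T. wt u v t)"
  have Npos: "N > 0" unfolding N_def using T by (intro sum_pos) (auto simp: wt_def)
  define R where "R = (v - u) / (2 * N)"
  have R: "R > 0" using uv Npos by (simp add: R_def)
  have pw: "R^2 - (\<Sum>t\<in>T. bump R (id t) y) \<le> F y" if y: "y \<in> {u..v}" for y
  proof -
    obtain t1 where t1: "t1 \<in> T" "(y - t1)^2 \<le> F y" using near y by blast
    have "bump R t1 y \<le> (\<Sum>t\<in>T. bump R (id t) y)"
      using member_le_sum[of t1 T "\<lambda>t. bump R (id t) y"] t1 T bump_nonneg by auto
    moreover have "R^2 - (y - t1)^2 \<le> bump R t1 y" by (simp add: bump_def)
    ultimately show ?thesis using t1 by linarith
  qed
  have "integral {u..v} (\<lambda>y. R^2 - (\<Sum>t\<in>T. bump R (id t) y)) \<le> integral {u..v} F"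
    by (rule integral_le[OF int_bumpsum(1)[OF R _ T(1)] Fi]) (use uv pw in auto)
  moreover have "integral {u..v} (\<lambda>y. R^2 - (\<Sum>t\<in>T. bump R (id t) y)) = R^2 * (v - u) - (\<Sum>t\<in>T. integral {u..v} (bump R (id t)))"
    using int_bumpsum(2)[OF R _ T(1)] uv by auto
  moreover have "(\<Sum>t\<in>T. integral {u..v} (bump R (id t))) \<le> (\<Sum>t\<in>T. 4*R^3/3 * wt u v t)"
    using int_bump_le[OF R] uv by (intro sum_mono) auto
  moreover have "(\<Sum>t\<in>T. 4*R^3/3 * wt u v t) = 4*R^3/3 * N" by (simp add: N_def sum_distrib_left)
  moreover have "R^2 * (v - u) - 4*R^3/3 * N = (v - u)^3 / (12 * N^2)"
    using Npos unfolding R_def by (simp add: field_simps power2_eq_square power3_eq_cube)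
  ultimately show ?thesis unfolding N_def[symmetric] by linarith
qed

lemma region_ub:
  assumes uv: "u \<le> v" and R: "R > 0" and I: "finite I" and Fi: "F integrable_on {u..v}"
    and pw: "\<forall>y\<in>{u..v}. F y \<le> R^2 - (\<Sum>i\<in>I. bump R (p i) y)"
    and ib: "\<forall>i\<in>I. integral {u..v} (bump R (p i)) = 4*R^3/3 * w i"
  shows "integral {u..v} F \<le> R^2 * (v - u) - 4*R^3/3 * (\<Sum>i\<in>I. w i)"
proof -
  have "integral {u..v} F \<le> integral {u..v} (\<lambda>y. R^2 - (\<Sum>i\<in>I. bump R (p i) y))"
    by (rule integral_le[OF Fi int_bumpsum(1)[OF R uv I]]) (use pw in auto)
  also have "\<dots> = R^2 * (v - u) - (\<Sum>i\<in>I. integral {u..v} (bump R (p i)))"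
    by (rule int_bumpsum(2)[OF R uv I])
  also have "(\<Sum>i\<in>I. integral {u..v} (bump R (p i))) = (\<Sum>i\<in>I. 4*R^3/3 * w i)"
    using ib by (intro sum.cong) auto
  finally show ?thesis by (simp add: sum_distrib_left)
qed

lemma cvx_step:
  fixes \<phi> :: "real \<Rightarrow> real" and a b y t :: real
  assumes c: "convex_on A \<phi>" and a: "a \<in> A" and y: "y \<in> A"
    and b: "b = (1 - t) * a + t * y" and t: "0 < t" "t \<le> 1"
  shows "\<phi> a \<le> \<phi> b \<Longrightarrow> \<phi> a \<le> \<phi> y" "\<phi> a < \<phi> b \<Longrightarrow> \<phi> a < \<phi> y"
proof -
  have "\<phi> b \<le> (1 - t) * \<phi> a + t * \<phi> y"
    using convex_onD[OF c, of t a y] t a y b by auto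
  then have "\<phi> b - \<phi> a \<le> t * (\<phi> y - \<phi> a)" by (simp add: algebra_simps)
  moreover
  { assume "\<phi> a \<le> \<phi> b" then have "0 \<le> t * (\<phi> y - \<phi> a)" using calculation by linarith
    then show "\<phi> a \<le> \<phi> y" using t by (simp add: zero_le_mult_iff) }
  { assume "\<phi> a < \<phi> b" then have "0 < t * (\<phi> y - \<phi> a)" using calculation by linarith
    then show "\<phi> a < \<phi> y" using t by (simp add: zero_less_mult_iff) }
qed

lemma lin_aux: "(d::real) \<noteq> 0 \<Longrightarrow> (1 - 1/d) * a + 1/d * (a + d) = a + 1"
  by (simp add: field_simps)

lemma lin_aux2: "(d::real) \<noteq> 0 \<Longrightarrow> (1 - 1/d) * a + 1/d * (a - d) = a - 1"
  by (simp add: field_simps)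

lemma disc_min:
  assumes c: "convex_on {0..} \<phi>"
    and up: "\<phi> (real n0) \<le> \<phi> (real n0 + 1)"
    and dn: "n0 > 0 \<Longrightarrow> \<phi> (real n0) \<le> \<phi> (real n0 - 1)"
  shows "\<phi> (real n0) \<le> \<phi> (real n)"
proof -
  consider "n = n0" | "n > n0" | "n < n0" by linarith
  then show ?thesis
  proof cases
    case 2
    show ?thesis
      proof -
      have d: "real n - real n0 > 0" using 2 by simp
      have "real n0 + 1 = (1 - 1/(real n - real n0)) * real n0 + 1/(real n - real n0) * real n"
        using lin_aux[of "real n - real n0" "real n0"] d by simp
      then show ?thesis
        by (intro cvx_step(1)[OF c _ _ _ _ _ up, where t="1/(real n - real n0)"]) (use d 2 in auto)
    qed
  next
    case 3
    show ?thesis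
      proof -
      have d: "real n0 - real n > 0" using 3 by simp
      have "real n0 - 1 = (1 - 1/(real n0 - real n)) * real n0 + 1/(real n0 - real n) * real n"
        using lin_aux2[of "real n0 - real n" "real n0"] d by simp
      then show ?thesis
        by (intro cvx_step(1)[OF c _ _ _ _ _ dn, where t="1/(real n0 - real n)"]) (use d 3 in auto)
    qed
  qed simp
qed

lemma disc_min_strict:
  assumes c: "convex_on {0..} \<phi>"
    and up: "\<phi> (real n0) < \<phi> (real n0 + 1)"
    and dn: "n0 > 0 \<Longrightarrow> \<phi> (real n0) < \<phi> (real n0 - 1)"
    and ne: "n \<noteq> n0"
  shows "\<phi> (real n0) < \<phi> (real n)"
proof -
  consider "n > n0" | "n < n0" using ne by linarith
  then show ?thesis
  proof cases
    case 1
    show ?thesis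
      proof -
      have d: "real n - real n0 > 0" using 1 by simp
      have "real n0 + 1 = (1 - 1/(real n - real n0)) * real n0 + 1/(real n - real n0) * real n"
        using lin_aux[of "real n - real n0" "real n0"] d by simp
      then show ?thesis
        by (intro cvx_step(2)[OF c _ _ _ _ _ up, where t="1/(real n - real n0)"]) (use d 1 in auto)
    qed
  next
    case 2
    show ?thesis
      proof -
      have d: "real n0 - real n > 0" using 2 by simp
      have "real n0 - 1 = (1 - 1/(real n0 - real n)) * real n0 + 1/(real n0 - real n) * real n"
        using lin_aux2[of "real n0 - real n" "real n0"] d by simp
      then show ?thesis
        by (intro cvx_step(2)[OF c _ _ _ _ _ dn, where t="1/(real n0 - real n)"]) (use d 2 in auto)
    qed
  qed
qed

lemma deriv_aux: "(a::real) > 0 \<Longrightarrow> K * (2 * a) / a ^ 4 = 2 * K / a ^ 3"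
  by (simp add: eval_nat_numeral field_simps)

lemma cvx_phi:
  assumes K: "K \<ge> 0" and c0: "c0 > 0"
  shows "convex_on {0..} (\<lambda>y::real. K / (y + c0)^2 + lam * y)"
proof (rule convex_on_realI[where f'="\<lambda>y. - 2 * K / (y + c0)^3 + lam"])
  show "connected {0::real..}" by simp
  fix y :: real assume "y \<in> {0..}"
  then have h: "y + c0 > 0" using c0 by auto
  show "((\<lambda>y. K / (y + c0)^2 + lam * y) has_real_derivative - 2 * K / (y + c0)^3 + lam) (at y)"
    apply (intro derivative_eq_intros refl)
    using h apply auto
    using deriv_aux[of "y + c0" K] h by (simp add: distrib_left)
next
  fix y z :: real assume "y \<in> {0..}" "z \<in> {0..}" "y \<le> z"
  then have "(y + c0)^3 \<le> (z + c0)^3" "0 < (y+c0)^3" "0 < (z+c0)^3" using c0 by (auto intro!: power_mono)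
  then have "1 / (z + c0)^3 \<le> 1 / (y + c0)^3" by (intro divide_left_mono) (auto intro: mult_pos_pos)
  then have "K * (1 / (z + c0)^3) \<le> K * (1 / (y + c0)^3)" using K by (rule mult_left_mono)
  then show "- 2 * K / (y + c0)^3 + lam \<le> - 2 * K / (z + c0)^3 + lam" by simp
qed

lemma frac_lt: "0 < b \<Longrightarrow> 0 < d \<Longrightarrow> a * d < c * b \<Longrightarrow> a / b < c / (d::real)"
  by (simp add: field_simps)
lemma frac_le: "0 < b \<Longrightarrow> 0 < d \<Longrightarrow> a * d \<le> c * b \<Longrightarrow> a / b \<le> c / (d::real)"
  by (simp add: field_simps)

lemma lam_eq: "X \<ge> (1::real) \<Longrightarrow> 1/X^2 - 1/(X+1)^2 = (2*X+1)/(X^2*(X+1)^2)"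
  by (simp add: field_simps; algebra)

lemma I1: assumes X: "X \<ge> (1::real)" shows "1/(X+1/2)^2 - 1/(X+1+1/2)^2 < 1/X^2 - 1/(X+1)^2"
proof -
  have e: "1/(X+1/2)^2 - 1/(X+1+1/2)^2 = 32*(X+1)/((2*X+1)^2*(2*X+3)^2)"
    using X by (simp add: field_simps; algebra)
  define s where "s = X - 1"
  have s: "s \<ge> 0" "X = 1 + s" using X by (auto simp: s_def)
  have p: "(2*X+1) * ((2*X+1)^2*(2*X+3)^2) - 32*(X+1) * (X^2*(X+1)^2) = 419 + 994 * s + 872 * s^2 + 336 * s^3 + 48 * s^4"
    using s(2) by algebra
  have "0 < 419 + 994 * s + 872 * s^2 + 336 * s^3 + 48 * s^4" using s(1) by (simp add: add_pos_nonneg)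
  then have "32*(X+1) * (X^2*(X+1)^2) < (2*X+1) * ((2*X+1)^2*(2*X+3)^2)" using p by linarith
  then show ?thesis unfolding e lam_eq[OF X] by (rule frac_lt[rotated 2]) (use X in auto)
qed

lemma I2: assumes X: "X \<ge> (1::real)" shows "1/X^2 - 1/(X+1)^2 < 1/(X-1+1/2)^2 - 1/(X+1/2)^2"
proof -
  have e: "1/(X-1+1/2)^2 - 1/(X+1/2)^2 = 32*X/((2*X-1)^2*(2*X+1)^2)"
    using X by (simp add: field_simps; algebra)
  define s where "s = X - 1"
  have s: "s \<ge> 0" "X = 1 + s" using X by (auto simp: s_def)
  have p: "32*X * (X^2*(X+1)^2) - (2*X+1) * ((2*X-1)^2*(2*X+1)^2) = 101 + 350 * s + 440 * s^2 + 240 * s^3 + 48 * s^4"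
    using s(2) by algebra
  have "0 < 101 + 350 * s + 440 * s^2 + 240 * s^3 + 48 * s^4" using s(1) by (simp add: add_pos_nonneg)
  then have "(2*X+1) * ((2*X-1)^2*(2*X+1)^2) < 32*X * (X^2*(X+1)^2)" using p by linarith
  then show ?thesis unfolding e lam_eq[OF X] by (rule frac_lt[rotated 2]) (use X in auto)
qed

lemma I3: assumes X: "X \<ge> (1::real)" shows "8/(2*X+1/2)^2 - 8/(2*X+1+1/2)^2 < 1/X^2 - 1/(X+1)^2"
proof -
  have e: "8/(2*X+1/2)^2 - 8/(2*X+1+1/2)^2 = 256*(2*X+1)/((4*X+1)^2*(4*X+3)^2)"
    using X by (simp add: field_simps; algebra)
  define s where "s = X - 1"
  have s: "s \<ge> 0" "X = 1 + s" using X by (auto simp: s_def)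
  have p: "(2*X+1) * ((4*X+1)^2*(4*X+3)^2) - 256*(2*X+1) * (X^2*(X+1)^2) = 603 + 1266 * s + 864 * s^2 + 192 * s^3"
    using s(2) by algebra
  have "0 < 603 + 1266 * s + 864 * s^2 + 192 * s^3" using s(1) by (simp add: add_pos_nonneg)
  then have "256*(2*X+1) * (X^2*(X+1)^2) < (2*X+1) * ((4*X+1)^2*(4*X+3)^2)" using p by linarith
  then show ?thesis unfolding e lam_eq[OF X] by (rule frac_lt[rotated 2]) (use X in auto)
qed

lemma I4: assumes X: "X \<ge> (1::real)" shows "1/X^2 - 1/(X+1)^2 < 8/(2*X-1+1/2)^2 - 8/(2*X+1/2)^2"
proof -
  have e: "8/(2*X-1+1/2)^2 - 8/(2*X+1/2)^2 = 512*X/((4*X-1)^2*(4*X+1)^2)"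
    using X by (simp add: field_simps; algebra)
  define s where "s = X - 1"
  have s: "s \<ge> 0" "X = 1 + s" using X by (auto simp: s_def)
  have p: "512*X * (X^2*(X+1)^2) - (2*X+1) * ((4*X-1)^2*(4*X+1)^2) = 1373 + 4862 * s + 6368 * s^2 + 3648 * s^3 + 768 * s^4"
    using s(2) by algebra
  have "0 < 1373 + 4862 * s + 6368 * s^2 + 3648 * s^3 + 768 * s^4" using s(1) by (simp add: add_pos_nonneg)
  then have "(2*X+1) * ((4*X-1)^2*(4*X+1)^2) < 512*X * (X^2*(X+1)^2)" using p by linarith
  then show ?thesis unfolding e lam_eq[OF X] by (rule frac_lt[rotated 2]) (use X in auto)
qed

lemma I5: assumes X: "X \<ge> (1::real)" shows "1/(X+1)^2 - 1/(X+1+1)^2 \<le> 1/X^2 - 1/(X+1)^2"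
proof -
  have e: "1/(X+1)^2 - 1/(X+1+1)^2 = (2*X+3)/((X+1)^2*(X+2)^2)"
    using X by (simp add: field_simps; algebra)
  define s where "s = X - 1"
  have s: "s \<ge> 0" "X = 1 + s" using X by (auto simp: s_def)
  have p: "(2*X+1) * ((X+1)^2*(X+2)^2) - (2*X+3) * (X^2*(X+1)^2) = 88 + 184 * s + 142 * s^2 + 48 * s^3 + 6 * s^4"
    using s(2) by algebra
  have "0 < 88 + 184 * s + 142 * s^2 + 48 * s^3 + 6 * s^4" using s(1) by (simp add: add_pos_nonneg)
  then have "(2*X+3) * (X^2*(X+1)^2) \<le> (2*X+1) * ((X+1)^2*(X+2)^2)" using p by linarith
  then show ?thesis unfolding e lam_eq[OF X] by (rule frac_le[rotated 2]) (use X in auto)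
qed

definition LL :: "real \<Rightarrow> real \<Rightarrow> real \<Rightarrow> real" where
  "LL p q r = 1/p^2 + 1/q^2 + 8/r^2"

lemma disc:
  fixes a b c x :: nat
  assumes sum: "a + b + c \<le> 4 * x"
  shows "LL (real x + 1/2) (real x + 1) (2 * real x + 1/2) \<le> LL (real a + 1/2) (real b + 1) (real c + 1/2)"
    and "LL (real a + 1/2) (real b + 1) (real c + 1/2) = LL (real x + 1/2) (real x + 1) (2 * real x + 1/2)
         \<Longrightarrow> a = x \<and> b = x \<and> c = 2 * x"
proof -
  have main: "LL (real x + 1/2) (real x + 1) (2 * real x + 1/2) \<le> LL (real a + 1/2) (real b + 1) (real c + 1/2) \<and>
     (LL (real a + 1/2) (real b + 1) (real c + 1/2) = LL (real x + 1/2) (real x + 1) (2 * real x + 1/2)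
         \<longrightarrow> a = x \<and> b = x \<and> c = 2 * x)"
  proof (cases "x = 0")
    case True
    then show ?thesis using sum by simp
  next
    case False
    define X where "X = real x"
    have X: "X \<ge> 1" using False by (simp add: X_def)
    define lam where "lam = 1/X^2 - 1/(X+1)^2"
    have lampos: "lam > 0" unfolding lam_def lam_eq[OF X] using X by simp
    define \<phi>1 where "\<phi>1 = (\<lambda>y::real. 1 / (y + 1/2)^2 + lam * y)"
    define \<phi>2 where "\<phi>2 = (\<lambda>y::real. 1 / (y + 1)^2 + lam * y)"
    define \<phi>3 where "\<phi>3 = (\<lambda>y::real. 8 / (y + 1/2)^2 + lam * y)"
    have c1: "convex_on {0..} \<phi>1" unfolding \<phi>1_def by (rule cvx_phi) auto
    have c2: "convex_on {0..} \<phi>2" unfolding \<phi>2_def by (rule cvx_phi) auto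
    have c3: "convex_on {0..} \<phi>3" unfolding \<phi>3_def by (rule cvx_phi) auto
    have u1: "\<phi>1 (real x) < \<phi>1 (real x + 1)" using I1[OF X, folded lam_def] unfolding \<phi>1_def X_def[symmetric] by (simp add: algebra_simps)
    have d1: "\<phi>1 (real x) < \<phi>1 (real x - 1)" using I2[OF X, folded lam_def] unfolding \<phi>1_def X_def[symmetric] by (simp add: algebra_simps)
    have u3: "\<phi>3 (real (2*x)) < \<phi>3 (real (2*x) + 1)" using I3[OF X, folded lam_def] unfolding \<phi>3_def of_nat_mult of_nat_numeral X_def[symmetric] by (simp add: algebra_simps)
    have d3: "\<phi>3 (real (2*x)) < \<phi>3 (real (2*x) - 1)" using I4[OF X, folded lam_def] unfolding \<phi>3_def of_nat_mult of_nat_numeral X_def[symmetric] by (simp add: algebra_simps)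
    have u2: "\<phi>2 (real x) \<le> \<phi>2 (real x + 1)" using I5[OF X, folded lam_def] unfolding \<phi>2_def X_def[symmetric] by (simp add: algebra_simps)
    have d2: "\<phi>2 (real x) \<le> \<phi>2 (real x - 1)"
    proof -
      have "\<phi>2 (real x - 1) = 1/X^2 + lam*X - lam" unfolding \<phi>2_def X_def by (simp add: algebra_simps)
      moreover have "\<phi>2 (real x) = 1/(X+1)^2 + lam*X" unfolding \<phi>2_def X_def by simp
      ultimately show ?thesis using lam_def by linarith
    qed
    have m1: "\<phi>1 (real x) \<le> \<phi>1 (real a)" by (rule disc_min[OF c1 less_imp_le[OF u1] less_imp_le[OF d1]])
    have m2: "\<phi>2 (real x) \<le> \<phi>2 (real b)" by (rule disc_min[OF c2 u2 d2])
    have m3: "\<phi>3 (real (2*x)) \<le> \<phi>3 (real c)" by (rule disc_min[OF c3 less_imp_le[OF u3] less_imp_le[OF d3]])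
    have s1: "a \<noteq> x \<Longrightarrow> \<phi>1 (real x) < \<phi>1 (real a)" by (rule disc_min_strict[OF c1 u1 d1])
    have s3: "c \<noteq> 2*x \<Longrightarrow> \<phi>3 (real (2*x)) < \<phi>3 (real c)" by (rule disc_min_strict[OF c3 u3 d3])
    have eqL: "LL (real a + 1/2) (real b + 1) (real c + 1/2) = \<phi>1 (real a) + \<phi>2 (real b) + \<phi>3 (real c) - lam * (real a + real b + real c)"
      unfolding LL_def \<phi>1_def \<phi>2_def \<phi>3_def by (simp add: algebra_simps)
    have eqS: "LL (real x + 1/2) (real x + 1) (2 * real x + 1/2) = \<phi>1 (real x) + \<phi>2 (real x) + \<phi>3 (real (2*x)) - lam * (4 * real x)"
      unfolding LL_def \<phi>1_def \<phi>2_def \<phi>3_def by (simp add: algebra_simps)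
    have sr: "real a + real b + real c \<le> 4 * real x" using sum by linarith
    have "lam * (real a + real b + real c) \<le> lam * (4 * real x)" using sr lampos by simp
    then have le: "LL (real x + 1/2) (real x + 1) (2 * real x + 1/2) \<le> LL (real a + 1/2) (real b + 1) (real c + 1/2)"
      unfolding eqL eqS using m1 m2 m3 by linarith
    have "a = x \<and> b = x \<and> c = 2 * x" if e: "LL (real a + 1/2) (real b + 1) (real c + 1/2) = LL (real x + 1/2) (real x + 1) (2 * real x + 1/2)"
    proof -
      have ax: "a = x"
      proof (rule ccontr)
        assume "a \<noteq> x"
        then have "\<phi>1 (real x) < \<phi>1 (real a)" by (rule s1)
        then show False using e unfolding eqL eqS using m2 m3 \<open>lam * (real a + real b + real c) \<le> lam * (4 * real x)\<close> by linarith
      qed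
      have cx: "c = 2 * x"
      proof (rule ccontr)
        assume "c \<noteq> 2 * x"
        then have "\<phi>3 (real (2*x)) < \<phi>3 (real c)" by (rule s3)
        then show False using e unfolding eqL eqS using m1 m2 \<open>lam * (real a + real b + real c) \<le> lam * (4 * real x)\<close> by linarith
      qed
      have bx: "b = x"
      proof (rule ccontr)
        assume "b \<noteq> x"
        then have "b < x" using sum ax cx by linarith
        then have "real a + real b + real c < 4 * real x" using ax cx by simp
        then have "lam * (real a + real b + real c) < lam * (4 * real x)" using lampos by simp
        then show False using e unfolding eqL eqS using m1 m2 m3 by linarith
      qed
      show ?thesis using ax bx cx by simp
    qed
    then show ?thesis using le by blast
  qed
  then show "LL (real x + 1/2) (real x + 1) (2 * real x + 1/2) \<le> LL (real a + 1/2) (real b + 1) (real c + 1/2)"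
    and "LL (real a + 1/2) (real b + 1) (real c + 1/2) = LL (real x + 1/2) (real x + 1) (2 * real x + 1/2)
         \<Longrightarrow> a = x \<and> b = x \<and> c = 2 * x" by auto
qed

definition Fn :: "real set \<Rightarrow> real \<Rightarrow> real" where
  "Fn S y = Min ((\<lambda>a. (y - a)^2) ` S)"

lemma Fn_cont: "finite S \<Longrightarrow> S \<noteq> {} \<Longrightarrow> continuous_on A (Fn S)"
  unfolding Fn_def using cont_Min continuous_on_subset by blast

lemma Fn_int: "finite S \<Longrightarrow> S \<noteq> {} \<Longrightarrow> Fn S integrable_on {u..v}"
  by (intro integrable_continuous_interval Fn_cont)

lemma qerr_Fn: "finite S \<Longrightarrow> S \<noteq> {} \<Longrightarrow> qerr (uniform_measure lborel {0..1}) S = integral {0..1} (Fn S)"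
  unfolding qerr_def using qerr_conv[OF cont_Min] by (simp add: Fn_def[abs_def])

lemma Fn_le: "finite S \<Longrightarrow> t \<in> S \<Longrightarrow> Fn S y \<le> (y - t)^2"
  unfolding Fn_def by (rule Min_le) auto

lemma Fn_attain: "finite S \<Longrightarrow> S \<noteq> {} \<Longrightarrow> \<exists>t\<in>S. Fn S y = (y - t)^2"
proof -
  assume a: "finite S" "S \<noteq> {}"
  have "Min ((\<lambda>a. (y - a)^2) ` S) \<in> (\<lambda>a. (y - a)^2) ` S" by (rule Min_in) (use a in auto)
  then show ?thesis unfolding Fn_def by auto
qed

lemma Fn_nonneg: "finite S \<Longrightarrow> S \<noteq> {} \<Longrightarrow> 0 \<le> Fn S y"
  using Fn_attain[of S y] by auto

lemma sq_mono_aux: "t \<le> u \<Longrightarrow> u \<le> (y::real) \<Longrightarrow> (y - u)^2 \<le> (y - t)^2"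
  by (intro power_mono) auto
lemma sq_mono_aux2: "u \<le> t \<Longrightarrow> (y::real) \<le> u \<Longrightarrow> (y - u)^2 \<le> (y - t)^2"
  by (simp add: abs_le_square_iff[symmetric])

lemma combine3:
  fixes f :: "real \<Rightarrow> real"
  assumes "f integrable_on {0..1::real}"
  shows "integral {0..1} f = integral {0..1/4} f + integral {1/4..1/2} f + integral {1/2..1} f"
proof -
  have i1: "f integrable_on {0..1/2}" by (rule integrable_subinterval_real[OF assms]) auto
  have "integral {0..1/4} f + integral {1/4..1/2} f = integral {0..1/2} f"
    by (rule Henstock_Kurzweil_Integration.integral_combine[OF _ _ i1]) auto
  moreover have "integral {0..1/2} f + integral {1/2..1} f = integral {0..1} f"
    by (rule Henstock_Kurzweil_Integration.integral_combine[OF _ _ assms]) auto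
  ultimately show ?thesis by linarith
qed

lemma lower:
  assumes fin: "finite S" and b: "1/4 \<in> S" "1/2 \<in> S"
  shows "LL (\<Sum>t\<in>S\<inter>{..1/4}. wt 0 (1/4) t) (\<Sum>t\<in>S\<inter>{1/4..1/2}. wt (1/4) (1/2) t) (\<Sum>t\<in>S\<inter>{1/2..}. wt (1/2) 1 t) / 768
         \<le> integral {0..1} (Fn S)"
proof -
  have ne: "S \<noteq> {}" using b by auto
  have r1: "(1/4 - 0)^3 / (12 * (\<Sum>t\<in>S\<inter>{..1/4}. wt 0 (1/4) t)^2) \<le> integral {0..1/4} (Fn S)"
  proof (rule region_lb)
    show "\<forall>y\<in>{0..1/4}. \<exists>t\<in>S \<inter> {..1/4}. (y - t)^2 \<le> Fn S y"
    proof
      fix y :: real assume y: "y \<in> {0..1/4}"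
      obtain t0 where t0: "t0 \<in> S" "Fn S y = (y - t0)^2" using Fn_attain[OF fin ne] by blast
      show "\<exists>t\<in>S \<inter> {..1/4}. (y - t)^2 \<le> Fn S y"
      proof (cases "t0 \<le> 1/4")
        case True then show ?thesis using t0 by auto
      next
        case False then show ?thesis using t0 b y sq_mono_aux2[of "1/4" t0 y] by (intro bexI[of _ "1/4"]) auto
      qed
    qed
  qed (use fin b Fn_int[OF fin ne] in auto)
  have r2: "(1/2 - 1/4)^3 / (12 * (\<Sum>t\<in>S\<inter>{1/4..1/2}. wt (1/4) (1/2) t)^2) \<le> integral {1/4..1/2} (Fn S)"
  proof (rule region_lb)
    show "\<forall>y\<in>{1/4..1/2}. \<exists>t\<in>S \<inter> {1/4..1/2}. (y - t)^2 \<le> Fn S y"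
    proof
      fix y :: real assume y: "y \<in> {1/4..1/2}"
      obtain t0 where t0: "t0 \<in> S" "Fn S y = (y - t0)^2" using Fn_attain[OF fin ne] by blast
      consider "t0 < 1/4" | "1/4 \<le> t0 \<and> t0 \<le> 1/2" | "1/2 < t0" by linarith
      then show "\<exists>t\<in>S \<inter> {1/4..1/2}. (y - t)^2 \<le> Fn S y"
      proof cases
        case 1 then show ?thesis using t0 b y sq_mono_aux[of t0 "1/4" y] by (intro bexI[of _ "1/4"]) auto
      next
        case 2 then show ?thesis using t0 by auto
      next
        case 3 then show ?thesis using t0 b y sq_mono_aux2[of "1/2" t0 y] by (intro bexI[of _ "1/2"]) auto
      qed
    qed
  qed (use fin b Fn_int[OF fin ne] in auto)
  have r3: "(1 - 1/2)^3 / (12 * (\<Sum>t\<in>S\<inter>{1/2..}. wt (1/2) 1 t)^2) \<le> integral {1/2..1} (Fn S)"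
  proof (rule region_lb)
    show "\<forall>y\<in>{1/2..1}. \<exists>t\<in>S \<inter> {1/2..}. (y - t)^2 \<le> Fn S y"
    proof
      fix y :: real assume y: "y \<in> {1/2..1}"
      obtain t0 where t0: "t0 \<in> S" "Fn S y = (y - t0)^2" using Fn_attain[OF fin ne] by blast
      show "\<exists>t\<in>S \<inter> {1/2..}. (y - t)^2 \<le> Fn S y"
      proof (cases "1/2 \<le> t0")
        case True then show ?thesis using t0 by auto
      next
        case False then show ?thesis using t0 b y sq_mono_aux[of t0 "1/2" y] by (intro bexI[of _ "1/2"]) auto
      qed
    qed
  qed (use fin b Fn_int[OF fin ne] in auto)
  have "integral {0..1} (Fn S) = integral {0..1/4} (Fn S) + integral {1/4..1/2} (Fn S) + integral {1/2..1} (Fn S)"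
    by (rule combine3[OF Fn_int[OF fin ne]])
  then show ?thesis using r1 r2 r3 unfolding LL_def by (simp add: power_divide field_simps)
qed

lemma grid:
  fixes z :: real and m :: nat
  assumes z: "-1 \<le> z" "z \<le> 2 * real m + 1"
  shows "\<exists>i\<le>m. \<bar>z - 2 * real i\<bar> \<le> 1 \<and> (\<forall>j\<le>m. j \<noteq> i \<longrightarrow> 1 \<le> \<bar>z - 2 * real j\<bar>)"
proof -
  define k where "k = nat \<lfloor>(z + 1) / 2\<rfloor>"
  have f0: "0 \<le> \<lfloor>(z + 1) / 2\<rfloor>" using z by simp
  have kk: "2 * real k \<le> z + 1" "z + 1 < 2 * real k + 2"
  proof -
    define fk where "fk = real_of_int \<lfloor>(z + 1) / 2\<rfloor>"
    have a1: "fk \<le> (z + 1) / 2" "(z + 1) / 2 < fk + 1" unfolding fk_def by linarith+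
    have a2: "real k = fk" using f0 by (simp add: k_def fk_def)
    show "2 * real k \<le> z + 1" using a1 a2 by simp
    show "z + 1 < 2 * real k + 2" using a1 a2 by simp
  qed
  define i where "i = min m k"
  have ib: "2 * real i - 1 \<le> z" "z \<le> 2 * real i + 1"
  proof -
    show "2 * real i - 1 \<le> z" using kk by (simp add: i_def min_def)
    show "z \<le> 2 * real i + 1"
    proof (cases "k \<le> m")
      case True then show ?thesis using kk by (simp add: i_def)
    next
      case False then show ?thesis using z by (simp add: i_def)
    qed
  qed
  have "i \<le> m" by (simp add: i_def)
  moreover have "\<bar>z - 2 * real i\<bar> \<le> 1" using ib by linarith
  moreover have "\<forall>j\<le>m. j \<noteq> i \<longrightarrow> 1 \<le> \<bar>z - 2 * real j\<bar>"
  proof (intro allI impI)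
    fix j assume "j \<le> m" "j \<noteq> i"
    then consider "j + 1 \<le> i" | "i + 1 \<le> j" by linarith
    then show "1 \<le> \<bar>z - 2 * real j\<bar>"
    proof cases
      case 1 then have "real j + 1 \<le> real i" by linarith
      then show ?thesis using ib by linarith
    next
      case 2 then have "real i + 1 \<le> real j" by linarith
      then show ?thesis using ib by linarith
    qed
  qed
  ultimately show ?thesis by blast
qed

lemma pw_ub:
  assumes R: "R > 0" and fin: "finite S" and inS: "\<forall>i\<le>m. q + 2 * real i * R \<in> S"
    and z: "-1 \<le> (y - q) / R" "(y - q) / R \<le> 2 * real m + 1"
  shows "Fn S y \<le> R^2 - (\<Sum>i\<in>{0..m}. bump R (q + 2 * real i * R) y)"
proof -
  define z where "z = (y - q) / R"
  obtain i0 where i0: "i0 \<le> m" "\<bar>z - 2 * real i0\<bar> \<le> 1" "\<forall>j\<le>m. j \<noteq> i0 \<longrightarrow> 1 \<le> \<bar>z - 2 * real j\<bar>"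
    using grid[of z m] z unfolding z_def by blast
  have diff: "y - (q + 2 * real j * R) = R * (z - 2 * real j)" for j
    using R unfolding z_def by (simp add: field_simps)
  have zero: "bump R (q + 2 * real j * R) y = 0" if "j \<le> m" "j \<noteq> i0" for j
  proof -
    have "1 \<le> \<bar>z - 2 * real j\<bar>" using i0 that by auto
    then have "R * 1 \<le> R * \<bar>z - 2 * real j\<bar>" using R by (intro mult_left_mono) auto
    then have "\<bar>R\<bar> \<le> \<bar>y - (q + 2 * real j * R)\<bar>" using R unfolding diff by (simp add: abs_mult)
    then have "R^2 \<le> (y - (q + 2 * real j * R))^2" by (simp add: abs_le_square_iff)
    then show ?thesis unfolding bump_def by simp
  qed
  have close: "(y - (q + 2 * real i0 * R))^2 \<le> R^2"
  proof -
    have "R * \<bar>z - 2 * real i0\<bar> \<le> R * 1" using R i0 by (intro mult_left_mono) auto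
    then have "\<bar>y - (q + 2 * real i0 * R)\<bar> \<le> \<bar>R\<bar>" using R unfolding diff by (simp add: abs_mult)
    then show ?thesis by (simp add: abs_le_square_iff)
  qed
  have "(\<Sum>i\<in>{0..m}. bump R (q + 2 * real i * R) y) = bump R (q + 2 * real i0 * R) y"
    by (rule sum.remove[where x=i0, THEN trans]) (use i0 zero in auto)
  also have "\<dots> = R^2 - (y - (q + 2 * real i0 * R))^2" using close unfolding bump_def by simp
  finally have "R^2 - (\<Sum>i\<in>{0..m}. bump R (q + 2 * real i * R) y) = (y - (q + 2 * real i0 * R))^2" by simp
  moreover have "Fn S y \<le> (y - (q + 2 * real i0 * R))^2" using Fn_le[OF fin] inS i0 by auto
  ultimately show ?thesis by simp
qed

lemma region_exact:
  assumes uv: "u < v" and N: "N > 0" and R: "R = (v - u) / (2 * N)" and fin: "finite S"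
    and inS: "\<forall>i\<le>m. q + 2 * real i * R \<in> S" and ne: "S \<noteq> {}"
    and zr: "\<forall>y\<in>{u..v}. -1 \<le> (y - q) / R \<and> (y - q) / R \<le> 2 * real m + 1"
    and ib: "\<forall>i\<in>{0..m}. integral {u..v} (bump R (q + 2 * real i * R)) = 4*R^3/3 * w i"
    and sw: "(\<Sum>i\<in>{0..m}. w i) = N"
  shows "integral {u..v} (Fn S) \<le> (v - u)^3 / (12 * N^2)"
proof -
  have Rp: "R > 0" using uv N R by simp
  have "integral {u..v} (Fn S) \<le> R^2 * (v - u) - 4*R^3/3 * (\<Sum>i\<in>{0..m}. w i)"
    by (rule region_ub[OF _ Rp _ Fn_int[OF fin ne] _ ib]) (use uv pw_ub[OF Rp fin inS] zr in auto)
  also have "\<dots> = (v - u)^3 / (12 * N^2)" unfolding sw R using N by (simp add: field_simps power2_eq_square power3_eq_cube)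
  finally show ?thesis .
qed

lemma int_bump_grid:
  assumes R: "R > 0" and uv: "u < v" and l: "t = u \<or> u \<le> t - R" and r: "t = v \<or> t + R \<le> v"
  shows "integral {u..v} (bump R t) = 4*R^3/3 * wt u v t"
proof -
  consider "t = u" | "t = v" | "t \<noteq> u \<and> t \<noteq> v" by blast
  then show ?thesis
  proof cases
    case 1 then have "t + R \<le> v" using r uv by auto
    then show ?thesis using int_bump_eq(3)[OF R] 1 uv by auto
  next
    case 2 then have "u \<le> t - R" using l uv by auto
    then show ?thesis using int_bump_eq(2)[OF R] 2 uv by auto
  next
    case 3 then show ?thesis using int_bump_eq(1)[OF R] l r uv by auto
  qed
qed

lemma mr: "(R::real) > 0 \<Longrightarrow> a \<le> b \<Longrightarrow> a * R \<le> b * R" by (rule mult_right_mono) auto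
lemma mrs: "(R::real) > 0 \<Longrightarrow> a < b \<Longrightarrow> a * R < b * R" by (rule mult_strict_right_mono) auto

lemma upper:
  fixes x :: nat
  shows "\<exists>\<alpha>. finite \<alpha> \<and> card \<alpha> \<le> 4 * x \<and>
     integral {0..1} (Fn (\<alpha> \<union> {1/4, 1/2})) \<le> LL (real x + 1/2) (real x + 1) (2 * real x + 1/2) / 768"
proof -
  define R1 where "R1 = (1/4 - 0) / (2 * (real x + 1/2))"
  define R2 where "R2 = (1/2 - 1/4) / (2 * (real x + 1))"
  define R3 where "R3 = (1 - 1/2) / (2 * (2 * real x + 1/2))"
  have R1: "R1 > 0" "(2 * real x + 1) * R1 = 1/4" unfolding R1_def by (auto simp: field_simps)
  have R2: "R2 > 0" "(2 * real x + 2) * R2 = 1/4" unfolding R2_def by (auto simp: field_simps)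
  have R3: "R3 > 0" "(4 * real x + 1) * R3 = 1/2" unfolding R3_def by (auto simp: field_simps)
  define G1 where "G1 = (\<lambda>i::nat. R1 + 2 * real i * R1) ` {0..x}"
  define G2 where "G2 = (\<lambda>i::nat. 1/4 + 2 * real i * R2) ` {0..x+1}"
  define G3 where "G3 = (\<lambda>i::nat. 1/2 + 2 * real i * R3) ` {0..2*x}"
  define S where "S = G1 \<union> G2 \<union> G3"
  have finS: "finite S" and neS: "S \<noteq> {}" unfolding S_def G1_def G2_def G3_def by auto
  have q4: "1/4 \<in> S" unfolding S_def G2_def by (auto intro!: image_eqI[where x=0])
  have q2: "1/2 \<in> S"
  proof -
    have "1/4 + 2 * real (x+1) * R2 = 1/2" using R2 by (simp add: algebra_simps)
    then show ?thesis unfolding S_def G2_def by (auto intro!: image_eqI[where x="x+1"])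
  qed
  define \<alpha> where "\<alpha> = S - {1/4, 1/2}"
  have Seq: "\<alpha> \<union> {1/4, 1/2} = S" using q4 q2 unfolding \<alpha>_def by auto
  have fa: "finite \<alpha>" using finS unfolding \<alpha>_def by auto
  have sub: "\<alpha> \<subseteq> (\<lambda>i::nat. R1 + 2 * real i * R1) ` {0..<x} \<union> (\<lambda>i::nat. 1/4 + 2 * real i * R2) ` {1..x}
      \<union> (\<lambda>i::nat. 1/2 + 2 * real i * R3) ` {1..2*x}"
  proof
    fix t assume t: "t \<in> \<alpha>"
    then have tS: "t \<in> S" and tn: "t \<noteq> 1/4" "t \<noteq> 1/2" unfolding \<alpha>_def by auto
    show "t \<in> (\<lambda>i::nat. R1 + 2 * real i * R1) ` {0..<x} \<union> (\<lambda>i::nat. 1/4 + 2 * real i * R2) ` {1..x}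
      \<union> (\<lambda>i::nat. 1/2 + 2 * real i * R3) ` {1..2*x}"
    proof -
      consider "t \<in> G1" | "t \<in> G2" | "t \<in> G3" using tS unfolding S_def by auto
      then show ?thesis
      proof cases
        case 1
        then obtain i where i: "i \<le> x" "t = R1 + 2 * real i * R1" unfolding G1_def by auto
        have "i \<noteq> x" using i tn R1 by (auto simp: algebra_simps)
        then show ?thesis using i by auto
      next
        case 2
        then obtain i where i: "i \<le> x + 1" "t = 1/4 + 2 * real i * R2" unfolding G2_def by auto
        have "i \<noteq> 0" using i tn by auto
        moreover have "i \<noteq> x + 1" using i tn R2 by (auto simp: algebra_simps)
        ultimately show ?thesis using i by auto
      next
        case 3
        then obtain i where i: "i \<le> 2*x" "t = 1/2 + 2 * real i * R3" unfolding G3_def by auto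
        have "i \<noteq> 0" using i tn by auto
        then show ?thesis using i by auto
      qed
    qed
  qed
  have "card \<alpha> \<le> card ((\<lambda>i::nat. R1 + 2 * real i * R1) ` {0..<x} \<union> (\<lambda>i::nat. 1/4 + 2 * real i * R2) ` {1..x}
      \<union> (\<lambda>i::nat. 1/2 + 2 * real i * R3) ` {1..2*x})" by (rule card_mono[OF _ sub]) auto
  also have "\<dots> \<le> card ((\<lambda>i::nat. R1 + 2 * real i * R1) ` {0..<x}) + card ((\<lambda>i::nat. 1/4 + 2 * real i * R2) ` {1..x})
      + card ((\<lambda>i::nat. 1/2 + 2 * real i * R3) ` {1..2*x})" by (intro order.trans[OF card_Un_le] add_mono card_Un_le) auto
  also have "\<dots> \<le> x + x + 2 * x" by (intro add_mono order.trans[OF card_image_le]) auto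
  finally have ca: "card \<alpha> \<le> 4 * x" by simp
  have i1: "integral {0..1/4} (Fn S) \<le> (1/4 - 0)^3 / (12 * (real x + 1/2)^2)"
  proof (rule region_exact[where R=R1 and q=R1 and m=x and w="\<lambda>i. wt 0 (1/4) (R1 + 2 * real i * R1)"])
    show "R1 = (1/4 - 0) / (2 * (real x + 1/2))" by (rule R1_def)
    show "\<forall>i\<le>x. R1 + 2 * real i * R1 \<in> S" unfolding S_def G1_def by auto
    show "\<forall>y\<in>{0..1/4}. -1 \<le> (y - R1) / R1 \<and> (y - R1) / R1 \<le> 2 * real x + 1"
      using R1 by (auto simp: pos_le_divide_eq pos_divide_le_eq algebra_simps)
    show "\<forall>i\<in>{0..x}. integral {0..1/4} (bump R1 (R1 + 2 * real i * R1)) = 4*R1^3/3 * wt 0 (1/4) (R1 + 2 * real i * R1)"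
    proof
      fix i assume i: "i \<in> {0..x}"
      show "integral {0..1/4} (bump R1 (R1 + 2 * real i * R1)) = 4*R1^3/3 * wt 0 (1/4) (R1 + 2 * real i * R1)"
      proof (rule int_bump_grid[OF R1(1)])
        show "R1 + 2 * real i * R1 = 0 \<or> 0 \<le> R1 + 2 * real i * R1 - R1" using R1 by simp
        show "R1 + 2 * real i * R1 = 1/4 \<or> R1 + 2 * real i * R1 + R1 \<le> 1/4"
        proof (cases "i = x")
          case True then show ?thesis using R1 by (simp add: algebra_simps)
        next
          case False then have "2 * real i + 2 \<le> 2 * real x + 1" using i by simp
          from mr[OF R1(1) this] have M: "(2 * real i + 2) * R1 \<le> (2 * real x + 1) * R1" .
          have "R1 + 2 * real i * R1 + R1 = (2 * real i + 2) * R1" by (simp add: algebra_simps)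
          then show ?thesis using M R1(2) by linarith
        qed
      qed simp
    qed
    have w1: "wt 0 (1/4) (R1 + 2 * real i * R1) = 1" if "i < x" for i
    proof -
      have "2 * real i + 1 < 2 * real x + 1" using that by simp
      from mrs[OF R1(1) this] have "(2 * real i + 1) * R1 < (2 * real x + 1) * R1" .
      moreover have "R1 + 2 * real i * R1 = (2 * real i + 1) * R1" by (simp add: algebra_simps)
      ultimately have "R1 + 2 * real i * R1 < 1/4" using R1(2) by linarith
      moreover have "0 < R1 + 2 * real i * R1" using R1 by (simp add: add_pos_nonneg)
      ultimately show ?thesis by (simp add: wt_def)
    qed
    have w2: "wt 0 (1/4) (R1 + 2 * real x * R1) = 1/2"
      using R1 by (simp add: wt_def algebra_simps)
    have "(\<Sum>i\<in>{0..x}. wt 0 (1/4) (R1 + 2 * real i * R1)) = wt 0 (1/4) (R1 + 2 * real x * R1) + (\<Sum>i\<in>{0..<x}. wt 0 (1/4) (R1 + 2 * real i * R1))"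
      by (rule sum.last_plus) simp
    also have "(\<Sum>i\<in>{0..<x}. wt 0 (1/4) (R1 + 2 * real i * R1)) = (\<Sum>i\<in>{0..<x}. 1)" using w1 by (intro sum.cong) auto
    finally show "(\<Sum>i\<in>{0..x}. wt 0 (1/4) (R1 + 2 * real i * R1)) = real x + 1/2" using w2 by simp
  qed (use finS neS in auto)
  have i2: "integral {1/4..1/2} (Fn S) \<le> (1/2 - 1/4)^3 / (12 * (real x + 1)^2)"
  proof (rule region_exact[where R=R2 and q="1/4" and m="x+1" and w="\<lambda>i. wt (1/4) (1/2) (1/4 + 2 * real i * R2)"])
    show "R2 = (1/2 - 1/4) / (2 * (real x + 1))" by (rule R2_def)
    show "\<forall>i\<le>x+1. 1/4 + 2 * real i * R2 \<in> S" unfolding S_def G2_def by auto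
    show "\<forall>y\<in>{1/4..1/2}. -1 \<le> (y - 1/4) / R2 \<and> (y - 1/4) / R2 \<le> 2 * real (x+1) + 1"
      using R2 by (auto simp: pos_le_divide_eq pos_divide_le_eq algebra_simps)
    show "\<forall>i\<in>{0..x+1}. integral {1/4..1/2} (bump R2 (1/4 + 2 * real i * R2)) = 4*R2^3/3 * wt (1/4) (1/2) (1/4 + 2 * real i * R2)"
    proof
      fix i assume i: "i \<in> {0..x+1}"
      show "integral {1/4..1/2} (bump R2 (1/4 + 2 * real i * R2)) = 4*R2^3/3 * wt (1/4) (1/2) (1/4 + 2 * real i * R2)"
      proof (rule int_bump_grid[OF R2(1)])
        show "1/4 + 2 * real i * R2 = 1/4 \<or> 1/4 \<le> 1/4 + 2 * real i * R2 - R2"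
        proof (cases "i = 0")
          case False then have "0 \<le> 2 * real i - 1" by simp
          then have "0 \<le> (2 * real i - 1) * R2" using R2 by simp
          moreover have "1/4 + 2 * real i * R2 - R2 = 1/4 + (2 * real i - 1) * R2" by (simp add: algebra_simps)
          ultimately show ?thesis by linarith
        qed simp
        show "1/4 + 2 * real i * R2 = 1/2 \<or> 1/4 + 2 * real i * R2 + R2 \<le> 1/2"
        proof (cases "i = x + 1")
          case True then show ?thesis using R2 by (simp add: algebra_simps)
        next
          case False then have "2 * real i + 1 \<le> 2 * real x + 2" using i by simp
          from mr[OF R2(1) this] have M: "(2 * real i + 1) * R2 \<le> (2 * real x + 2) * R2" .
          have "1/4 + 2 * real i * R2 + R2 = 1/4 + (2 * real i + 1) * R2" by (simp add: algebra_simps)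
          then show ?thesis using M R2(2) by linarith
        qed
      qed simp
    qed
    have w1: "wt (1/4) (1/2) (1/4 + 2 * real i * R2) = 1" if "1 \<le> i" "i \<le> x" for i
    proof -
      have "2 * real i < 2 * real x + 2" using that by simp
      from mrs[OF R2(1) this] have M: "(2 * real i) * R2 < (2 * real x + 2) * R2" .
      then have "1/4 + 2 * real i * R2 < 1/2" using R2(2) by linarith
      moreover have "0 < 2 * real i * R2" using R2 that by simp
      ultimately show ?thesis by (simp add: wt_def)
    qed
    have w2: "wt (1/4) (1/2) (1/4 + 2 * real (x+1) * R2) = 1/2"
      using R2 by (simp add: wt_def algebra_simps)
    have w0: "wt (1/4) (1/2) (1/4 + 2 * real 0 * R2) = 1/2" by (simp add: wt_def)
    have "(\<Sum>i\<in>{0..x+1}. wt (1/4) (1/2) (1/4 + 2 * real i * R2)) = wt (1/4) (1/2) (1/4 + 2 * real 0 * R2) + (\<Sum>i\<in>{Suc 0..x+1}. wt (1/4) (1/2) (1/4 + 2 * real i * R2))"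
      by (rule sum.atLeast_Suc_atMost) simp
    also have "(\<Sum>i\<in>{Suc 0..x+1}. wt (1/4) (1/2) (1/4 + 2 * real i * R2)) = wt (1/4) (1/2) (1/4 + 2 * real (x+1) * R2) + (\<Sum>i\<in>{Suc 0..<x+1}. wt (1/4) (1/2) (1/4 + 2 * real i * R2))"
      by (rule sum.last_plus) simp
    also have "(\<Sum>i\<in>{Suc 0..<x+1}. wt (1/4) (1/2) (1/4 + 2 * real i * R2)) = (\<Sum>i\<in>{Suc 0..<x+1}. 1)" using w1 by (intro sum.cong) auto
    finally show "(\<Sum>i\<in>{0..x+1}. wt (1/4) (1/2) (1/4 + 2 * real i * R2)) = real x + 1" using w0 w2 by simp
  qed (use finS neS in auto)
  have i3: "integral {1/2..1} (Fn S) \<le> (1 - 1/2)^3 / (12 * (2 * real x + 1/2)^2)"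
  proof (rule region_exact[where R=R3 and q="1/2" and m="2*x" and w="\<lambda>i. wt (1/2) 1 (1/2 + 2 * real i * R3)"])
    show "R3 = (1 - 1/2) / (2 * (2 * real x + 1/2))" by (rule R3_def)
    show "\<forall>i\<le>2*x. 1/2 + 2 * real i * R3 \<in> S" unfolding S_def G3_def by auto
    show "\<forall>y\<in>{1/2..1}. -1 \<le> (y - 1/2) / R3 \<and> (y - 1/2) / R3 \<le> 2 * real (2*x) + 1"
      using R3 by (auto simp: pos_le_divide_eq pos_divide_le_eq algebra_simps)
    show "\<forall>i\<in>{0..2*x}. integral {1/2..1} (bump R3 (1/2 + 2 * real i * R3)) = 4*R3^3/3 * wt (1/2) 1 (1/2 + 2 * real i * R3)"
    proof
      fix i assume i: "i \<in> {0..2*x}"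
      show "integral {1/2..1} (bump R3 (1/2 + 2 * real i * R3)) = 4*R3^3/3 * wt (1/2) 1 (1/2 + 2 * real i * R3)"
      proof (rule int_bump_grid[OF R3(1)])
        show "1/2 + 2 * real i * R3 = 1/2 \<or> 1/2 \<le> 1/2 + 2 * real i * R3 - R3"
        proof (cases "i = 0")
          case False then have "0 \<le> 2 * real i - 1" by simp
          then have "0 \<le> (2 * real i - 1) * R3" using R3 by simp
          moreover have "1/2 + 2 * real i * R3 - R3 = 1/2 + (2 * real i - 1) * R3" by (simp add: algebra_simps)
          ultimately show ?thesis by linarith
        qed simp
        show "1/2 + 2 * real i * R3 = 1 \<or> 1/2 + 2 * real i * R3 + R3 \<le> 1"
        proof -
          have "2 * real i + 1 \<le> 4 * real x + 1" using i by simp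
          from mr[OF R3(1) this] have M: "(2 * real i + 1) * R3 \<le> (4 * real x + 1) * R3" .
          have "1/2 + 2 * real i * R3 + R3 = 1/2 + (2 * real i + 1) * R3" by (simp add: algebra_simps)
          then show ?thesis using M R3(2) by linarith
        qed
      qed simp
    qed
    have w1: "wt (1/2) 1 (1/2 + 2 * real i * R3) = 1" if "1 \<le> i" "i \<le> 2*x" for i
    proof -
      have "2 * real i < 4 * real x + 1" using that by simp
      from mrs[OF R3(1) this] have M: "(2 * real i) * R3 < (4 * real x + 1) * R3" .
      then have "1/2 + 2 * real i * R3 < 1" using R3(2) by linarith
      moreover have "0 < 2 * real i * R3" using R3 that by simp
      ultimately show ?thesis by (simp add: wt_def)
    qed
    have w0: "wt (1/2) 1 (1/2 + 2 * real 0 * R3) = 1/2" by (simp add: wt_def)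
    have "(\<Sum>i\<in>{0..2*x}. wt (1/2) 1 (1/2 + 2 * real i * R3)) = wt (1/2) 1 (1/2 + 2 * real 0 * R3) + (\<Sum>i\<in>{Suc 0..2*x}. wt (1/2) 1 (1/2 + 2 * real i * R3))"
      by (rule sum.atLeast_Suc_atMost) simp
    also have "(\<Sum>i\<in>{Suc 0..2*x}. wt (1/2) 1 (1/2 + 2 * real i * R3)) = (\<Sum>i\<in>{Suc 0..2*x}. 1)" using w1 by (intro sum.cong) auto
    finally show "(\<Sum>i\<in>{0..2*x}. wt (1/2) 1 (1/2 + 2 * real i * R3)) = 2 * real x + 1/2" using w0 by simp
  qed (use finS neS in auto)
  have "integral {0..1} (Fn S) = integral {0..1/4} (Fn S) + integral {1/4..1/2} (Fn S) + integral {1/2..1} (Fn S)"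
    by (rule combine3[OF Fn_int[OF finS neS]])
  also have "\<dots> \<le> LL (real x + 1/2) (real x + 1) (2 * real x + 1/2) / 768"
  proof -
    have e1: "(1/4 - 0)^3 / (12 * (real x + 1/2)^2) = (1/(real x + 1/2)^2)/768" by (simp add: field_simps)
    have e2: "(1/2 - 1/4)^3 / (12 * (real x + 1)^2) = (1/(real x + 1)^2)/768" by (simp add: field_simps)
    have e3: "(1 - 1/2)^3 / (12 * (2 * real x + 1/2)^2) = (8/(2 * real x + 1/2)^2)/768" by (simp add: field_simps)
    have eL: "LL (real x + 1/2) (real x + 1) (2 * real x + 1/2) / 768 = (1/(real x + 1/2)^2)/768 + (1/(real x + 1)^2)/768 + (8/(2 * real x + 1/2)^2)/768"
      unfolding LL_def by (simp add: add_divide_distrib)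
    show ?thesis using i1 i2 i3 unfolding e1 e2 e3 eL by linarith
  qed
  finally show ?thesis using fa ca Seq by metis
qed

lemma inv_sq_mono: "0 < a \<Longrightarrow> a \<le> b \<Longrightarrow> 1/b^2 \<le> 1/(a::real)^2"
  by (intro divide_left_mono power_mono mult_pos_pos) auto
lemma inv_sq_strict: "0 < a \<Longrightarrow> a < b \<Longrightarrow> 1/b^2 < 1/(a::real)^2"
  by (intro divide_strict_left_mono power_strict_mono mult_pos_pos) auto

lemma wt_sum_bounds:
  assumes "finite A"
  shows "(\<Sum>t\<in>A. wt u v t) \<le> real (card A)" "0 \<le> (\<Sum>t\<in>A. wt u v t)"
    "(\<Sum>t\<in>A. wt u v t) = real (card A) \<Longrightarrow> A \<subseteq> {u<..<v}"
proof -
  have "(\<Sum>t\<in>A. wt u v t) \<le> (\<Sum>t\<in>A. 1)" by (intro sum_mono) (auto simp: wt_def)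
  then show "(\<Sum>t\<in>A. wt u v t) \<le> real (card A)" by simp
  show "0 \<le> (\<Sum>t\<in>A. wt u v t)" by (intro sum_nonneg) (auto simp: wt_def)
  show "A \<subseteq> {u<..<v}" if e: "(\<Sum>t\<in>A. wt u v t) = real (card A)"
  proof (rule ccontr)
    assume "\<not> A \<subseteq> {u<..<v}"
    then obtain t where t: "t \<in> A" "t \<notin> {u<..<v}" by blast
    have "(\<Sum>t\<in>A. wt u v t) < (\<Sum>t\<in>A. 1)"
      by (rule sum_strict_mono_ex1[OF assms]) (use t in \<open>auto simp: wt_def\<close>)
    then show False using e by simp
  qed
qed

lemma qerr_nonneg: "finite S \<Longrightarrow> S \<noteq> {} \<Longrightarrow> 0 \<le> qerr (uniform_measure lborel {0..1}) S"
  by (simp add: qerr_Fn Fn_int Fn_nonneg integral_nonneg)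

theorem lemma3p6:
  fixes x :: nat and \<alpha>n :: "real set"
  assumes "cond_opt_set (uniform_measure lborel {0..1}) {1/4, 1/2} (4 * x + 2) \<alpha>n"
  shows "int (card (\<alpha>n \<inter> {0..1/4})) - 1 = int (card (\<alpha>n \<inter> {1/4..1/2})) - 2 \<and>
         int (card (\<alpha>n \<inter> {1/2..1})) - 1 = 2 * (int (card (\<alpha>n \<inter> {0..1/4})) - 1)"
proof -
  define P where "P = uniform_measure lborel {0..1::real}"
  define \<beta> where "\<beta> = {1/4, 1/2::real}"
  have cb: "card \<beta> = 2" by (simp add: \<beta>_def)
  obtain \<alpha> where \<alpha>: "finite \<alpha>" "card \<alpha> \<le> 4 * x" "\<alpha>n = \<alpha> \<union> \<beta>"
    and opt: "qerr P \<alpha>n = condV P \<beta> (4 * x + 2)"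
    using assms unfolding cond_opt_set_def P_def \<beta>_def by (auto simp: cb[unfolded \<beta>_def])
  define S where "S = \<alpha>n"
  have finS: "finite S" using \<alpha> by (simp add: S_def \<beta>_def)
  have q4: "1/4 \<in> S" and q2: "1/2 \<in> S" using \<alpha> by (auto simp: S_def \<beta>_def)
  have neS: "S \<noteq> {}" using q4 by auto
  have cS: "card S \<le> 4 * x + 2"
  proof -
    have "card S \<le> card \<alpha> + card \<beta>" unfolding S_def \<alpha>(3) by (rule card_Un_le)
    then show ?thesis using \<alpha>(2) cb by linarith
  qed
  obtain \<alpha>s where \<alpha>s: "finite \<alpha>s" "card \<alpha>s \<le> 4 * x"
    "integral {0..1} (Fn (\<alpha>s \<union> {1/4, 1/2})) \<le> LL (real x + 1/2) (real x + 1) (2 * real x + 1/2) / 768"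
    using upper[of x] by blast
  have "condV P \<beta> (4 * x + 2) \<le> qerr P (\<alpha>s \<union> \<beta>)"
    unfolding condV_def
  proof (rule cINF_lower)
    show "\<alpha>s \<in> {\<alpha>. finite \<alpha> \<and> card \<alpha> \<le> 4 * x + 2 - card \<beta>}" using \<alpha>s cb by auto
    show "bdd_below ((\<lambda>\<alpha>. qerr P (\<alpha> \<union> \<beta>)) ` {\<alpha>. finite \<alpha> \<and> card \<alpha> \<le> 4 * x + 2 - card \<beta>})"
      unfolding P_def by (rule bdd_belowI[where m=0]) (auto intro!: qerr_nonneg simp: \<beta>_def)
  qed
  also have "qerr P (\<alpha>s \<union> \<beta>) = integral {0..1} (Fn (\<alpha>s \<union> {1/4, 1/2}))"
    unfolding P_def \<beta>_def using \<alpha>s by (intro qerr_Fn) auto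
  finally have up: "qerr P S \<le> LL (real x + 1/2) (real x + 1) (2 * real x + 1/2) / 768"
    using \<alpha>s(3) opt unfolding S_def by linarith
  define A where "A = S \<inter> {..<1/4}"
  define B where "B = S \<inter> {1/4<..<1/2}"
  define C where "C = S \<inter> {1/2<..}"
  have fA: "finite A" "finite B" "finite C" using finS by (auto simp: A_def B_def C_def)
  define sA where "sA = (\<Sum>t\<in>A. wt 0 (1/4) t)"
  define sC where "sC = (\<Sum>t\<in>C. wt (1/2) 1 t)"
  have N1: "(\<Sum>t\<in>S\<inter>{..1/4}. wt 0 (1/4) t) = 1/2 + sA"
  proof -
    have "S \<inter> {..1/4} = insert (1/4) A" using q4 by (auto simp: A_def)
    then show ?thesis using fA by (simp add: sA_def A_def wt_def)
  qed
  have N2: "(\<Sum>t\<in>S\<inter>{1/4..1/2}. wt (1/4) (1/2) t) = 1 + real (card B)"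
  proof -
    have e: "S \<inter> {1/4..1/2} = insert (1/4) (insert (1/2) B)" using q4 q2 by (auto simp: B_def)
    have "(\<Sum>t\<in>B. wt (1/4) (1/2) t) = (\<Sum>t\<in>B. 1)" by (intro sum.cong) (auto simp: B_def wt_def)
    then show ?thesis unfolding e using fA by (simp add: B_def wt_def)
  qed
  have N3: "(\<Sum>t\<in>S\<inter>{1/2..}. wt (1/2) 1 t) = 1/2 + sC"
  proof -
    have "S \<inter> {1/2..} = insert (1/2) C" using q2 by (auto simp: C_def)
    then show ?thesis using fA by (simp add: sC_def C_def wt_def)
  qed
  have low: "LL (1/2 + sA) (1 + real (card B)) (1/2 + sC) / 768 \<le> qerr P S"
    using lower[OF finS q4 q2] unfolding N1 N2 N3 P_def using qerr_Fn[OF finS neS] by simp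
  have sAb: "sA \<le> real (card A)" "0 \<le> sA" unfolding sA_def using wt_sum_bounds[OF fA(1)] by auto
  have sCb: "sC \<le> real (card C)" "0 \<le> sC" unfolding sC_def using wt_sum_bounds[OF fA(3)] by auto
  have t1: "1/(real (card A) + 1/2)^2 \<le> 1/(1/2 + sA)^2" using sAb by (intro inv_sq_mono) auto
  have t3: "1/(real (card C) + 1/2)^2 \<le> 1/(1/2 + sC)^2" using sCb by (intro inv_sq_mono) auto
  have cardS: "card S = card A + card B + card C + 2"
  proof -
    have e: "S = insert (1/4) (insert (1/2) (A \<union> B \<union> C))" using q4 q2 by (auto simp: A_def B_def C_def)
    have "card (A \<union> B \<union> C) = card A + card B + card C"
    proof -
      have d1: "A \<inter> B = {}" "(A \<union> B) \<inter> C = {}" by (auto simp: A_def B_def C_def)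
      have "card (A \<union> B \<union> C) = card (A \<union> B) + card C" using fA d1 by (intro card_Un_disjoint) auto
      also have "card (A \<union> B) = card A + card B" using fA d1 by (intro card_Un_disjoint) auto
      finally show ?thesis .
    qed
    then show ?thesis unfolding e using fA by (auto simp: A_def B_def C_def)
  qed
  have csum: "card A + card B + card C \<le> 4 * x" using cardS cS by linarith
  note D = disc[OF csum]
  have LLle: "LL (real (card A) + 1/2) (real (card B) + 1) (real (card C) + 1/2) \<le> LL (1/2 + sA) (1 + real (card B)) (1/2 + sC)"
    unfolding LL_def using t1 t3 by (simp add: add.commute)
  have eqM: "LL (real (card A) + 1/2) (real (card B) + 1) (real (card C) + 1/2) = LL (real x + 1/2) (real x + 1) (2 * real x + 1/2)"
    using D(1) LLle low up by linarith
  then have cards: "card A = x" "card B = x" "card C = 2 * x" using D(2) by auto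
  have eqN: "LL (real (card A) + 1/2) (real (card B) + 1) (real (card C) + 1/2) = LL (1/2 + sA) (1 + real (card B)) (1/2 + sC)"
    using D(1) LLle low up eqM by linarith
  have sAe: "sA = real (card A)"
  proof (rule ccontr)
    assume "sA \<noteq> real (card A)"
    then have "sA < real (card A)" using sAb by auto
    then have "1/(real (card A) + 1/2)^2 < 1/(1/2 + sA)^2" using sAb by (intro inv_sq_strict) auto
    then show False using eqN t3 unfolding LL_def by (simp add: add.commute)
  qed
  have sCe: "sC = real (card C)"
  proof (rule ccontr)
    assume "sC \<noteq> real (card C)"
    then have "sC < real (card C)" using sCb by auto
    then have "1/(real (card C) + 1/2)^2 < 1/(1/2 + sC)^2" using sCb by (intro inv_sq_strict) auto
    then show False using eqN t1 unfolding LL_def by (simp add: add.commute)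
  qed
  have Asub: "A \<subseteq> {0<..<1/4}" using wt_sum_bounds(3)[OF fA(1)] sAe unfolding sA_def by blast
  have Csub: "C \<subseteq> {1/2<..<1}" using wt_sum_bounds(3)[OF fA(3)] sCe unfolding sC_def by blast
  have k: "card (S \<inter> {0..1/4}) = x + 1"
  proof -
    have "S \<inter> {0..1/4} = insert (1/4) A" using q4 Asub by (auto simp: A_def)
    then show ?thesis using fA cards by (simp add: A_def)
  qed
  have l: "card (S \<inter> {1/4..1/2}) = x + 2"
  proof -
    have "S \<inter> {1/4..1/2} = insert (1/4) (insert (1/2) B)" using q4 q2 by (auto simp: B_def)
    then show ?thesis using fA cards by (simp add: B_def)
  qed
  have m: "card (S \<inter> {1/2..1}) = 2 * x + 1"
  proof -
    have "S \<inter> {1/2..1} = insert (1/2) C" using q2 Csub by (auto simp: C_def)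
    then show ?thesis using fA cards by (simp add: C_def)
  qed
  show ?thesis using k l m unfolding S_def by simp
qed

end
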